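(* Let $\{\mathcal H,\gamma,\ell,\ell^{(2)},Y\}$ be hypersurface data $(\Phi,\xi)$-embedded in a semi-Riemannian manifold $(\mathcal M,g)$, let $\eta\in\mathfrak X(\mathcal M)$, $\mathcal K=\mathcal L_\eta g$, and write $\eta|_{\Phi(\mathcal H)}=C\xi+\Phi_\star\bar\eta$ with $C\in\mathcal F(\mathcal H)$, $\bar\eta\in\mathfrak X(\mathcal H)$. Then the pullback $\mathcal K_{ab}$ of $\mathcal K$ to $\mathcal H$ satisfies $$\mathcal K_{ab}=2CY_{ab}+2\ell_{(a}\mathring\nabla_{b)}C+(\mathcal L_{\bar\eta}\gamma)_{ab}.$$
   Context: Hypersurface data: $\mathcal H$ smooth $\mathfrak n$-manifold with symmetric $(0,2)$-tensor $\gamma$, one-form $\ell$, function $\ell^{(2)}$, symmetric $(0,2)$-tensor $Y$, with $\mathcal A((W,a),(V,b))=\gamma(W,V)+a\ell(V)+b\ell(W)+ab\ell^{(2)}$ non-degenerate on each $T_p\mathcal H\times\mathbb R$. $n$, $n^{(2)}$, $P$ defined by $\gamma_{ab}n^b+n^{(2)}\ell_a=0$, $\ell_an^a+n^{(2)}\ell^{(2)}=1$, $P^{ab}\ell_b+\ell^{(2)}n^a=0$, $P^{ac}\gamma_{cb}+\ell_bn^a=\delta^a_b$; $U_{ab}=\frac12(\mathcal L_n\gamma)_{ab}+\ell_{(a}\partial_{b)}n^{(2)}$, $F=\frac12d\ell$; $\mathring\nabla$ is the torsion-free connection on $\mathcal H$ with $\mathring\nabla_a\gamma_{bc}=-\ell_cU_{ab}-\ell_bU_{ac}$,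 $\mathring\nabla_a\ell_b=F_{ab}-\ell^{(2)}U_{ab}$ (for functions $\mathring\nabla_bC=\partial_bC$). Symmetrization brackets have weight $\frac12$. $(\Phi,\xi)$-embedded: $\Phi:\mathcal H\to\mathcal M$ embedding, $\xi$ a vector field along $\Phi(\mathcal H)$ transverse to it, $\Phi^\star g=\gamma$, $\Phi^\star(g(\xi,\cdot))=\ell$, $\Phi^\star(g(\xi,\xi))=\ell^{(2)}$, $\frac12\Phi^\star(\mathcal L_\xi g)=Y$. *)

theory Defs
  imports "HOL-Analysis.Analysis"
begin

text \<open>A chart domain of the hypersurface H is an open
  set U of real^'n, a chart domain of the ambient manifold M an open set V of real^'m.
  Tensor fields are represented by their components.\<close>

definition partial :: "'i::finite \<Rightarrow> (real^'i \<Rightarrow> real) \<Rightarrow> real^'i \<Rightarrow> real" where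
  "partial i f x = deriv (\<lambda>t. f (x + t *\<^sub>R axis i 1)) 0"

fun Ck_on :: "nat \<Rightarrow> (real^'i::finite) set \<Rightarrow> (real^'i \<Rightarrow> real) \<Rightarrow> bool" where
  "Ck_on 0 U f = continuous_on U f"
| "Ck_on (Suc k) U f = ((\<forall>x\<in>U. f differentiable (at x)) \<and> (\<forall>i. Ck_on k U (partial i f)))"

definition smooth_fun_on :: "(real^'i::finite) set \<Rightarrow> (real^'i \<Rightarrow> real) \<Rightarrow> bool" where
  "smooth_fun_on U f = (\<forall>k. Ck_on k U f)"

definition smooth_vec_on :: "(real^'i::finite) set \<Rightarrow> (real^'i \<Rightarrow> real^'j::finite) \<Rightarrow> bool" where
  "smooth_vec_on U f = (\<forall>j. smooth_fun_on U (\<lambda>x. f x $ j))"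

definition smooth_mat_on :: "(real^'i::finite) set \<Rightarrow> (real^'i \<Rightarrow> real^'j^'j::finite) \<Rightarrow> bool" where
  "smooth_mat_on U f = (\<forall>j k. smooth_fun_on U (\<lambda>x. f x $ j $ k))"

definition tang :: "(real^'n::finite \<Rightarrow> real^'m::finite) \<Rightarrow> 'n \<Rightarrow> real^'n \<Rightarrow> real^'m" where
  "tang \<Phi> a x = (\<chi> \<mu>. partial a (\<lambda>y. \<Phi> y $ \<mu>) x)"

definition gmet :: "real^'m^'m \<Rightarrow> real^'m \<Rightarrow> real^'m::finite \<Rightarrow> real" where
  "gmet G v w = (\<Sum>\<mu>\<in>UNIV. \<Sum>\<nu>\<in>UNIV. v $ \<mu> * G $ \<mu> $ \<nu> * w $ \<nu>)"

definition semi_riemannian_on :: "(real^'m::finite) set \<Rightarrow> (real^'m \<Rightarrow> real^'m^'m) \<Rightarrow> bool" where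
  "semi_riemannian_on V g = (open V \<and> smooth_mat_on V g \<and>
     (\<forall>p\<in>V. transpose (g p) = g p \<and> det (g p) \<noteq> 0))"

definition embedding_on :: "(real^'n::finite) set \<Rightarrow> (real^'n \<Rightarrow> real^'m::finite) \<Rightarrow> bool" where
  "embedding_on U \<Phi> = (open U \<and> smooth_vec_on U \<Phi> \<and> inj_on \<Phi> U \<and>
     continuous_on (\<Phi> ` U) (inv_into U \<Phi>) \<and>
     (\<forall>x\<in>U. independent (range (\<lambda>a. tang \<Phi> a x)) \<and> inj (\<lambda>a. tang \<Phi> a x)))"

definition transverse_on :: "(real^'n::finite) set \<Rightarrow> (real^'n \<Rightarrow> real^'m::finite) \<Rightarrow> (real^'n \<Rightarrow> real^'m) \<Rightarrow> bool" where
  "transverse_on U \<Phi> \<xi> = (\<forall>x\<in>U. \<xi> x \<notin> span (range (\<lambda>a. tang \<Phi> a x)))"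

definition lie_metric :: "(real^'m::finite \<Rightarrow> real^'m) \<Rightarrow> (real^'m \<Rightarrow> real^'m^'m) \<Rightarrow> real^'m \<Rightarrow> 'm \<Rightarrow> 'm \<Rightarrow> real" where
  "lie_metric \<eta> g p \<mu> \<nu> = (\<Sum>\<rho>\<in>UNIV.
      \<eta> p $ \<rho> * partial \<rho> (\<lambda>q. g q $ \<mu> $ \<nu>) p
    + g p $ \<rho> $ \<nu> * partial \<mu> (\<lambda>q. \<eta> q $ \<rho>) p
    + g p $ \<mu> $ \<rho> * partial \<nu> (\<lambda>q. \<eta> q $ \<rho>) p)"

definition pullback2 :: "(real^'n::finite \<Rightarrow> real^'m::finite) \<Rightarrow> (real^'m \<Rightarrow> 'm \<Rightarrow> 'm \<Rightarrow> real) \<Rightarrow> real^'n \<Rightarrow> 'n \<Rightarrow> 'n \<Rightarrow> real" where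
  "pullback2 \<Phi> K x a b = (\<Sum>\<mu>\<in>UNIV. \<Sum>\<nu>\<in>UNIV. tang \<Phi> a x $ \<mu> * K (\<Phi> x) \<mu> \<nu> * tang \<Phi> b x $ \<nu>)"

text \<open>\<open>1/2 \<Phi>^\<star>(\<L>_\<xi> g)\<close> for a vector field \<xi> along \<Phi>(H) (given as a function on H);
  this is the coordinate expression of the pullback, which does not depend on the
  extension of \<xi> off \<Phi>(H).\<close>
definition transverse_Y :: "(real^'m::finite \<Rightarrow> real^'m^'m) \<Rightarrow> (real^'n::finite \<Rightarrow> real^'m) \<Rightarrow> (real^'n \<Rightarrow> real^'m) \<Rightarrow> real^'n \<Rightarrow> 'n \<Rightarrow> 'n \<Rightarrow> real" where
  "transverse_Y g \<Phi> \<xi> x a b = (1/2) *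
     ((\<Sum>\<rho>\<in>UNIV. \<Sum>\<mu>\<in>UNIV. \<Sum>\<nu>\<in>UNIV.
         \<xi> x $ \<rho> * partial \<rho> (\<lambda>q. g q $ \<mu> $ \<nu>) (\<Phi> x) * tang \<Phi> a x $ \<mu> * tang \<Phi> b x $ \<nu>)
    + (\<Sum>\<rho>\<in>UNIV. \<Sum>\<nu>\<in>UNIV. g (\<Phi> x) $ \<rho> $ \<nu> * partial a (\<lambda>y. \<xi> y $ \<rho>) x * tang \<Phi> b x $ \<nu>)
    + (\<Sum>\<mu>\<in>UNIV. \<Sum>\<rho>\<in>UNIV. g (\<Phi> x) $ \<mu> $ \<rho> * tang \<Phi> a x $ \<mu> * partial b (\<lambda>y. \<xi> y $ \<rho>) x))"

definition lie2 :: "(real^'n::finite \<Rightarrow> real^'n) \<Rightarrow> (real^'n \<Rightarrow> 'n \<Rightarrow> 'n \<Rightarrow> real) \<Rightarrow> real^'n \<Rightarrow> 'n \<Rightarrow> 'n \<Rightarrow> real" where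
  "lie2 V T x a b = (\<Sum>c\<in>UNIV.
      V x $ c * partial c (\<lambda>y. T y a b) x
    + T x c b * partial a (\<lambda>y. V y $ c) x
    + T x a c * partial b (\<lambda>y. V y $ c) x)"

definition hypersurface_data_on :: "(real^'n::finite) set \<Rightarrow> (real^'n \<Rightarrow> 'n \<Rightarrow> 'n \<Rightarrow> real) \<Rightarrow> (real^'n \<Rightarrow> 'n \<Rightarrow> real) \<Rightarrow> (real^'n \<Rightarrow> real) \<Rightarrow> (real^'n \<Rightarrow> 'n \<Rightarrow> 'n \<Rightarrow> real) \<Rightarrow> bool" where
  "hypersurface_data_on U \<gamma> l l2 Y = (open U \<and>
     (\<forall>a b. smooth_fun_on U (\<lambda>x. \<gamma> x a b) \<and> smooth_fun_on U (\<lambda>x. Y x a b)) \<and>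
     (\<forall>a. smooth_fun_on U (\<lambda>x. l x a)) \<and> smooth_fun_on U l2 \<and>
     (\<forall>x\<in>U. (\<forall>a b. \<gamma> x a b = \<gamma> x b a \<and> Y x a b = Y x b a) \<and>
        (\<forall>W :: real^'n. \<forall>s :: real.
           (\<forall>V :: real^'n. \<forall>t :: real.
              (\<Sum>a\<in>UNIV. \<Sum>b\<in>UNIV. \<gamma> x a b * W $ a * V $ b)
              + s * (\<Sum>b\<in>UNIV. l x b * V $ b) + t * (\<Sum>a\<in>UNIV. l x a * W $ a)
              + s * t * l2 x = 0) \<longrightarrow> W = 0 \<and> s = 0)))"

definition embedded_data_on :: "(real^'n::finite) set \<Rightarrow> (real^'n \<Rightarrow> 'n \<Rightarrow> 'n \<Rightarrow> real) \<Rightarrow> (real^'n \<Rightarrow> 'n \<Rightarrow> real) \<Rightarrow> (real^'n \<Rightarrow> real) \<Rightarrow> (real^'n \<Rightarrow> 'n \<Rightarrow> 'n \<Rightarrow> real)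
    \<Rightarrow> (real^'m::finite) set \<Rightarrow> (real^'m \<Rightarrow> real^'m^'m) \<Rightarrow> (real^'n \<Rightarrow> real^'m) \<Rightarrow> (real^'n \<Rightarrow> real^'m) \<Rightarrow> bool" where
  "embedded_data_on U \<gamma> l l2 Y V g \<Phi> \<xi> = (
     embedding_on U \<Phi> \<and> \<Phi> ` U \<subseteq> V \<and> smooth_vec_on U \<xi> \<and> transverse_on U \<Phi> \<xi> \<and>
     (\<forall>x\<in>U. (\<forall>a b. \<gamma> x a b = gmet (g (\<Phi> x)) (tang \<Phi> a x) (tang \<Phi> b x)) \<and>
        (\<forall>a. l x a = gmet (g (\<Phi> x)) (\<xi> x) (tang \<Phi> a x)) \<and>
        l2 x = gmet (g (\<Phi> x)) (\<xi> x) (\<xi> x) \<and>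
        (\<forall>a b. Y x a b = transverse_Y g \<Phi> \<xi> x a b)))"

end

theory Submission
  imports Defs
begin


lemma partial_has_derivative:
  assumes "(f has_derivative f') (at x)"
  shows "((\<lambda>t. f (x + t *\<^sub>R axis i 1)) has_real_derivative f' (axis i 1)) (at 0)"
    and "partial i f x = f' (axis i 1)"
proof -
  have l: "((\<lambda>t::real. x + t *\<^sub>R axis i 1) has_derivative (\<lambda>t. t *\<^sub>R axis i 1)) (at 0)"
    by (auto intro!: derivative_eq_intros)
  have a: "(f has_derivative f') (at (x + (0::real) *\<^sub>R axis i 1))" using assms by simp
  have "((\<lambda>t. f (x + t *\<^sub>R axis i 1)) has_derivative (\<lambda>t. f' (t *\<^sub>R axis i 1))) (at 0)"
    using has_derivative_compose[OF l a] by simp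
  moreover have "(\<lambda>t. f' (t *\<^sub>R axis i 1)) = (\<lambda>t. t * f' (axis i 1))"
    using has_derivative_bounded_linear[OF assms] by (simp add: linear_simps bounded_linear.linear)
  moreover have "(\<lambda>t. t * f' (axis i 1)) = (*) (f' (axis i 1))" by (auto simp: mult.commute)
  ultimately show d: "((\<lambda>t. f (x + t *\<^sub>R axis i 1)) has_real_derivative f' (axis i 1)) (at 0)"
    by (simp add: has_field_derivative_def)
  show "partial i f x = f' (axis i 1)"
    unfolding partial_def using DERIV_imp_deriv[OF d] .
qed

lemma partial_frechet:
  assumes "f differentiable (at x)"
  shows "partial i f x = frechet_derivative f (at x) (axis i 1)"
  using partial_has_derivative(2) assms frechet_derivative_works by blast

lemma partial_line:
  assumes "f differentiable (at (p + s *\<^sub>R axis i 1))"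
  shows "((\<lambda>s. f (p + s *\<^sub>R axis i 1)) has_real_derivative partial i f (p + s *\<^sub>R axis i 1)) (at s)"
proof -
  obtain f' where f': "(f has_derivative f') (at (p + s *\<^sub>R axis i 1))" using assms differentiable_def by blast
  have l: "((\<lambda>t::real. p + t *\<^sub>R axis i 1) has_derivative (\<lambda>t. t *\<^sub>R axis i 1)) (at s)"
    by (auto intro!: derivative_eq_intros)
  have "((\<lambda>t. f (p + t *\<^sub>R axis i 1)) has_derivative (\<lambda>t. f' (t *\<^sub>R axis i 1))) (at s)"
    using has_derivative_compose[OF l f'] by simp
  moreover have "(\<lambda>t. f' (t *\<^sub>R axis i 1)) = (*) (f' (axis i 1))"
    using has_derivative_bounded_linear[OF f'] by (auto simp add: linear_simps bounded_linear.linear mult.commute)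
  ultimately show ?thesis using partial_has_derivative(2)[OF f'] by (simp add: has_field_derivative_def)
qed

lemma partial_local:
  assumes "open U" "x \<in> U" "\<And>y. y \<in> U \<Longrightarrow> f y = g y"
  shows "partial i f x = partial i g x"
proof -
  obtain r where r: "r > 0" "ball x r \<subseteq> U" using assms openE by blast
  have "eventually (\<lambda>t. f (x + t *\<^sub>R axis i 1) = g (x + t *\<^sub>R axis i 1)) (nhds (0::real))"
    unfolding eventually_nhds_metric
  proof (intro exI[of _ r] conjI allI impI)
    fix t :: real assume "dist t 0 < r"
    hence "x + t *\<^sub>R axis i 1 \<in> ball x r" by (simp add: dist_norm)
    thus "f (x + t *\<^sub>R axis i 1) = g (x + t *\<^sub>R axis i 1)" using r assms(3) by blast
  qed (use r in auto)
  thus ?thesis unfolding partial_def by (rule deriv_cong_ev) simp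
qed

lemma partial_mult:
  assumes "f differentiable (at x)" "g differentiable (at x)"
  shows "partial i (\<lambda>y. f y * g y) x = partial i f x * g x + f x * partial i g x"
proof -
  obtain f' g' where f': "(f has_derivative f') (at x)" and g': "(g has_derivative g') (at x)"
    using assms differentiable_def by metis
  have "((\<lambda>y. f y * g y) has_derivative (\<lambda>h. f x * g' h + f' h * g x)) (at x)"
    using has_derivative_mult[OF f' g'] .
  from partial_has_derivative(2)[OF this] partial_has_derivative(2)[OF f'] partial_has_derivative(2)[OF g']
  show ?thesis by simp
qed

lemma partial_add:
  assumes "f differentiable (at x)" "g differentiable (at x)"
  shows "partial i (\<lambda>y. f y + g y) x = partial i f x + partial i g x"
proof -
  obtain f' g' where f': "(f has_derivative f') (at x)" and g': "(g has_derivative g') (at x)"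
    using assms differentiable_def by metis
  have "((\<lambda>y. f y + g y) has_derivative (\<lambda>h. f' h + g' h)) (at x)"
    using has_derivative_add[OF f' g'] .
  from partial_has_derivative(2)[OF this] partial_has_derivative(2)[OF f'] partial_has_derivative(2)[OF g']
  show ?thesis by simp
qed

lemma partial_sum:
  assumes "finite S" "\<And>k. k \<in> S \<Longrightarrow> f k differentiable (at x)"
  shows "partial i (\<lambda>y. \<Sum>k\<in>S. f k y) x = (\<Sum>k\<in>S. partial i (f k) x)"
  using assms
proof (induction S rule: finite_induct)
  case empty
  have "((\<lambda>y. 0::real) has_derivative (\<lambda>h. 0)) (at x)" by simp
  from partial_has_derivative(2)[OF this] show ?case by simp
next
  case (insert k S)
  have "partial i (\<lambda>y. f k y + (\<Sum>k\<in>S. f k y)) x = partial i (f k) x + partial i (\<lambda>y. \<Sum>k\<in>S. f k y) x"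
    by (rule partial_add) (use insert in \<open>auto intro!: differentiable_sum\<close>)
  with insert show ?case by simp
qed

lemma linear_cart_expand:
  fixes h :: "real^'m::finite \<Rightarrow> real"
  assumes "linear h"
  shows "h w = (\<Sum>\<rho>\<in>UNIV. w $ \<rho> * h (axis \<rho> 1))"
proof -
  have "w = (\<Sum>\<rho>\<in>UNIV. w $ \<rho> *\<^sub>R axis \<rho> 1)"
    using basis_expansion[of w] by (simp add: scalar_mult_eq_scaleR)
  hence "h w = h (\<Sum>\<rho>\<in>UNIV. w $ \<rho> *\<^sub>R axis \<rho> 1)" by simp
  also have "\<dots> = (\<Sum>\<rho>\<in>UNIV. w $ \<rho> * h (axis \<rho> 1))"
    using assms by (simp add: linear_sum linear_scale)
  finally show ?thesis .
qed

lemma has_derivative_cart: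
  fixes f :: "real^'n::finite \<Rightarrow> real^'m::finite"
  assumes "\<And>\<rho>. ((\<lambda>y. f y $ \<rho>) has_derivative f' \<rho>) (at x)"
  shows "(f has_derivative (\<lambda>v. \<chi> \<rho>. f' \<rho> v)) (at x)"
proof -
  have e: "(\<Sum>\<rho>\<in>UNIV. w $ \<rho> *\<^sub>R axis \<rho> 1) = w" for w :: "real^'m"
    using basis_expansion[of w] by (simp add: scalar_mult_eq_scaleR)
  have "((\<lambda>y. \<Sum>\<rho>\<in>UNIV. f y $ \<rho> *\<^sub>R axis \<rho> 1) has_derivative (\<lambda>v. \<Sum>\<rho>\<in>UNIV. f' \<rho> v *\<^sub>R axis \<rho> (1::real))) (at x)"
    by (intro has_derivative_sum has_derivative_scaleR_left assms)
  moreover have "(\<lambda>v. \<Sum>\<rho>\<in>UNIV. f' \<rho> v *\<^sub>R axis \<rho> (1::real)) = (\<lambda>v. \<chi> \<rho>. f' \<rho> v)"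
    using e[of "\<chi> \<rho>. f' \<rho> _"] by simp
  ultimately show ?thesis by (simp add: e)
qed

lemma differentiable_cart:
  fixes f :: "real^'n::finite \<Rightarrow> real^'m::finite"
  assumes "\<And>\<rho>. (\<lambda>y. f y $ \<rho>) differentiable (at x)"
  shows "f differentiable (at x)"
proof -
  obtain f' where "\<And>\<rho>. ((\<lambda>y. f y $ \<rho>) has_derivative f' \<rho>) (at x)"
    using assms unfolding differentiable_def by metis
  thus ?thesis using has_derivative_cart differentiableI by blast
qed

lemma partial_chain:
  fixes \<Phi> :: "real^'n::finite \<Rightarrow> real^'m::finite" and h :: "real^'m \<Rightarrow> real"
  assumes "\<And>\<rho>. (\<lambda>y. \<Phi> y $ \<rho>) differentiable (at x)" "h differentiable (at (\<Phi> x))"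
  shows "partial a (\<lambda>y. h (\<Phi> y)) x = (\<Sum>\<rho>\<in>UNIV. partial a (\<lambda>y. \<Phi> y $ \<rho>) x * partial \<rho> h (\<Phi> x))"
proof -
  obtain f' where f': "\<And>\<rho>. ((\<lambda>y. \<Phi> y $ \<rho>) has_derivative f' \<rho>) (at x)"
    using assms(1) unfolding differentiable_def by metis
  obtain h' where h': "(h has_derivative h') (at (\<Phi> x))" using assms(2) differentiable_def by blast
  have P: "(\<Phi> has_derivative (\<lambda>v. \<chi> \<rho>. f' \<rho> v)) (at x)" using has_derivative_cart f' by blast
  have c: "((\<lambda>y. h (\<Phi> y)) has_derivative (\<lambda>v. h' (\<chi> \<rho>. f' \<rho> v))) (at x)"
    using has_derivative_compose[OF P h'] .
  have lin: "linear h'" using h' has_derivative_linear by blast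
  have "partial a (\<lambda>y. h (\<Phi> y)) x = h' (\<chi> \<rho>. f' \<rho> (axis a 1))"
    using partial_has_derivative(2)[OF c] .
  also have "\<dots> = (\<Sum>\<rho>\<in>UNIV. f' \<rho> (axis a 1) * h' (axis \<rho> 1))"
    by (rule linear_cart_expand[OF lin, of "\<chi> \<rho>. f' \<rho> (axis a 1)", simplified])
  also have "\<dots> = (\<Sum>\<rho>\<in>UNIV. partial a (\<lambda>y. \<Phi> y $ \<rho>) x * partial \<rho> h (\<Phi> x))"
    using partial_has_derivative(2)[OF f'] partial_has_derivative(2)[OF h'] by simp
  finally show ?thesis .
qed



lemma norm_two_axis:
  "norm (s *\<^sub>R axis i (1::real) + t *\<^sub>R axis j (1::real) :: real^'n::finite) \<le> \<bar>s\<bar> + \<bar>t\<bar>"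
proof -
  have "norm (s *\<^sub>R axis i (1::real) + t *\<^sub>R axis j (1::real) :: real^'n::finite)
      \<le> norm (s *\<^sub>R axis i (1::real) :: real^'n) + norm (t *\<^sub>R axis j (1::real) :: real^'n)"
    by (rule norm_triangle_ineq)
  thus ?thesis by simp
qed

lemma mixed_limit:
  fixes f :: "real^'n::finite \<Rightarrow> real"
  assumes U: "open U" "x \<in> U" and df: "\<And>y. y \<in> U \<Longrightarrow> f differentiable (at y)"
    and dfi: "\<And>y. y \<in> U \<Longrightarrow> partial i f differentiable (at y)"
    and cont: "continuous (at x) (partial j (partial i f))"
  shows "((\<lambda>h. (f (x + h *\<^sub>R axis i 1 + h *\<^sub>R axis j 1) - f (x + h *\<^sub>R axis i 1)
                 - f (x + h *\<^sub>R axis j 1) + f x) / h^2) \<longlongrightarrow> partial j (partial i f) x) (at_right 0)"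
proof (rule tendstoI)
  fix e :: real assume e: "e > 0"
  define D where "D = partial j (partial i f)"
  obtain \<delta> where \<delta>: "\<delta> > 0" "\<And>p. dist p x < \<delta> \<Longrightarrow> dist (D p) (D x) < e"
    using cont e unfolding continuous_at_eps_delta D_def by blast
  obtain r where r: "r > 0" "ball x r \<subseteq> U" using U openE by blast
  define d where "d = min \<delta> r / 2"
  have d: "d > 0" using \<delta> r by (simp add: d_def)
  define ei :: "real^'n" where "ei = axis i 1"
  define ej :: "real^'n" where "ej = axis j 1"
  show "\<forall>\<^sub>F h in at_right 0. dist ((f (x + h *\<^sub>R axis i 1 + h *\<^sub>R axis j 1) - f (x + h *\<^sub>R axis i 1)
                 - f (x + h *\<^sub>R axis j 1) + f x) / h^2) (partial j (partial i f) x) < e"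
  proof (rule eventually_at_rightI[OF _ d])
    fix h :: real assume "h \<in> {0<..<d}"
    hence h: "0 < h" "h < d" by auto
    have near: "dist (x + s *\<^sub>R ei + t *\<^sub>R ej) x < min \<delta> r" if "0 \<le> s" "s \<le> h" "0 \<le> t" "t \<le> h" for s t
    proof -
      have "dist (x + s *\<^sub>R ei + t *\<^sub>R ej) x = norm (s *\<^sub>R ei + t *\<^sub>R ej)"
        by (simp add: dist_norm algebra_simps)
      also have "\<dots> \<le> \<bar>s\<bar> + \<bar>t\<bar>" unfolding ei_def ej_def by (rule norm_two_axis)
      also have "\<dots> < min \<delta> r" using that h unfolding d_def by auto
      finally show ?thesis .
    qed
    have inU: "x + s *\<^sub>R ei + t *\<^sub>R ej \<in> U" if "0 \<le> s" "s \<le> h" "0 \<le> t" "t \<le> h" for s t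
      using near[OF that] r by (auto simp: dist_commute)
    define g where "g s = f (x + h *\<^sub>R ej + s *\<^sub>R ei) - f (x + s *\<^sub>R ei)" for s
    have gd: "(g has_real_derivative (partial i f (x + h *\<^sub>R ej + s *\<^sub>R ei) - partial i f (x + s *\<^sub>R ei))) (at s)"
      if "0 \<le> s" "s \<le> h" for s
    proof -
      have a: "f differentiable (at (x + h *\<^sub>R ej + s *\<^sub>R axis i 1))"
        using df inU[OF that, of h] h by (simp add: ei_def add_ac)
      have b: "f differentiable (at (x + s *\<^sub>R axis i 1))"
        using df inU[OF that, of 0] h by (simp add: ei_def add_ac)
      show ?thesis unfolding g_def ei_def
        by (rule DERIV_diff[OF partial_line[OF a] partial_line[OF b]])
    qed
    obtain s1 where s1: "0 < s1" "s1 < h"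
      "g h - g 0 = (h - 0) * (partial i f (x + h *\<^sub>R ej + s1 *\<^sub>R ei) - partial i f (x + s1 *\<^sub>R ei))"
      using MVT2[OF h(1), of g "\<lambda>s. partial i f (x + h *\<^sub>R ej + s *\<^sub>R ei) - partial i f (x + s *\<^sub>R ei)"] gd
      by auto
    define k where "k t = partial i f (x + s1 *\<^sub>R ei + t *\<^sub>R ej)" for t
    have kd: "(k has_real_derivative D (x + s1 *\<^sub>R ei + t *\<^sub>R ej)) (at t)" if "0 \<le> t" "t \<le> h" for t
    proof -
      have a: "partial i f differentiable (at (x + s1 *\<^sub>R ei + t *\<^sub>R axis j 1))"
        using dfi inU[of s1 t] that s1 by (simp add: ej_def)
      show ?thesis unfolding k_def D_def ej_def by (rule partial_line[OF a])
    qed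
    obtain t1 where t1: "0 < t1" "t1 < h" "k h - k 0 = (h - 0) * D (x + s1 *\<^sub>R ei + t1 *\<^sub>R ej)"
      using MVT2[OF h(1), of k "\<lambda>t. D (x + s1 *\<^sub>R ei + t *\<^sub>R ej)"] kd by auto
    have k1: "k h = partial i f (x + h *\<^sub>R ej + s1 *\<^sub>R ei)" unfolding k_def by (simp add: add_ac)
    have k0: "k 0 = partial i f (x + s1 *\<^sub>R ei)" unfolding k_def by simp
    have "f (x + h *\<^sub>R ei + h *\<^sub>R ej) - f (x + h *\<^sub>R ei) - f (x + h *\<^sub>R ej) + f x = g h - g 0"
      unfolding g_def by (simp add: add_ac)
    also have "\<dots> = h * (h * D (x + s1 *\<^sub>R ei + t1 *\<^sub>R ej))"
      using s1(3) t1(3) k1 k0 by simp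
    finally have "(f (x + h *\<^sub>R ei + h *\<^sub>R ej) - f (x + h *\<^sub>R ei) - f (x + h *\<^sub>R ej) + f x) / h^2
        = D (x + s1 *\<^sub>R ei + t1 *\<^sub>R ej)"
      using h by (simp add: power2_eq_square)
    moreover have "dist (D (x + s1 *\<^sub>R ei + t1 *\<^sub>R ej)) (D x) < e"
      using \<delta>(2) near[of s1 t1] s1 t1 by auto
    ultimately show "dist ((f (x + h *\<^sub>R axis i 1 + h *\<^sub>R axis j 1) - f (x + h *\<^sub>R axis i 1)
                 - f (x + h *\<^sub>R axis j 1) + f x) / h^2) (partial j (partial i f) x) < e"
      by (simp add: ei_def ej_def D_def)
  qed
qed

lemma clairaut:
  fixes f :: "real^'n::finite \<Rightarrow> real"
  assumes U: "open U" "x \<in> U" and df: "\<And>y. y \<in> U \<Longrightarrow> f differentiable (at y)"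
    and dfi: "\<And>y. y \<in> U \<Longrightarrow> partial i f differentiable (at y)"
    and dfj: "\<And>y. y \<in> U \<Longrightarrow> partial j f differentiable (at y)"
    and ci: "continuous (at x) (partial j (partial i f))"
    and cj: "continuous (at x) (partial i (partial j f))"
  shows "partial j (partial i f) x = partial i (partial j f) x"
proof -
  have A: "((\<lambda>h. (f (x + h *\<^sub>R axis i 1 + h *\<^sub>R axis j 1) - f (x + h *\<^sub>R axis i 1)
                 - f (x + h *\<^sub>R axis j 1) + f x) / h^2) \<longlongrightarrow> partial j (partial i f) x) (at_right 0)"
    by (rule mixed_limit[OF U df dfi ci])
  have B: "((\<lambda>h. (f (x + h *\<^sub>R axis j 1 + h *\<^sub>R axis i 1) - f (x + h *\<^sub>R axis j 1)
                 - f (x + h *\<^sub>R axis i 1) + f x) / h^2) \<longlongrightarrow> partial i (partial j f) x) (at_right 0)"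
    by (rule mixed_limit[OF U df dfj cj])
  have "(\<lambda>h. (f (x + h *\<^sub>R axis j 1 + h *\<^sub>R axis i 1) - f (x + h *\<^sub>R axis j 1)
                 - f (x + h *\<^sub>R axis i 1) + f x) / h^2) =
        (\<lambda>h. (f (x + h *\<^sub>R axis i 1 + h *\<^sub>R axis j 1) - f (x + h *\<^sub>R axis i 1)
                 - f (x + h *\<^sub>R axis j 1) + f x) / h^2)"
  proof
    fix h :: real
    have v: "x + h *\<^sub>R axis j 1 + h *\<^sub>R axis i 1 = x + h *\<^sub>R axis i 1 + h *\<^sub>R axis j 1"
      by (simp add: add_ac)
    show "(f (x + h *\<^sub>R axis j 1 + h *\<^sub>R axis i 1) - f (x + h *\<^sub>R axis j 1)
                 - f (x + h *\<^sub>R axis i 1) + f x) / h^2 = (f (x + h *\<^sub>R axis i 1 + h *\<^sub>R axis j 1) - f (x + h *\<^sub>R axis i 1)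
                 - f (x + h *\<^sub>R axis j 1) + f x) / h^2"
      unfolding v by (simp add: algebra_simps)
  qed
  with B have B': "((\<lambda>h. (f (x + h *\<^sub>R axis i 1 + h *\<^sub>R axis j 1) - f (x + h *\<^sub>R axis i 1)
                 - f (x + h *\<^sub>R axis j 1) + f x) / h^2) \<longlongrightarrow> partial i (partial j f) x) (at_right 0)"
    by simp
  show ?thesis using tendsto_unique[OF _ A B'] by simp
qed



lemma rot3: "(\<Sum>x\<in>A. \<Sum>y\<in>B. \<Sum>z\<in>C. f x y z) = (\<Sum>z\<in>C. \<Sum>x\<in>A. \<Sum>y\<in>B. f x y z)"
proof -
  have "(\<Sum>x\<in>A. \<Sum>y\<in>B. \<Sum>z\<in>C. f x y z) = (\<Sum>x\<in>A. \<Sum>z\<in>C. \<Sum>y\<in>B. f x y z)"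
    by (rule sum.cong[OF refl], rule sum.swap)
  also have "\<dots> = (\<Sum>z\<in>C. \<Sum>x\<in>A. \<Sum>y\<in>B. f x y z)" by (rule sum.swap)
  finally show ?thesis .
qed

lemma rot4: "(\<Sum>x\<in>A. \<Sum>y\<in>B. \<Sum>z\<in>C. \<Sum>w\<in>D. f x y z w) = (\<Sum>w\<in>D. \<Sum>x\<in>A. \<Sum>y\<in>B. \<Sum>z\<in>C. f x y z w)"
proof -
  have "(\<Sum>x\<in>A. \<Sum>y\<in>B. \<Sum>z\<in>C. \<Sum>w\<in>D. f x y z w) = (\<Sum>x\<in>A. \<Sum>w\<in>D. \<Sum>y\<in>B. \<Sum>z\<in>C. f x y z w)"
    by (rule sum.cong[OF refl], rule rot3)
  also have "\<dots> = (\<Sum>w\<in>D. \<Sum>x\<in>A. \<Sum>y\<in>B. \<Sum>z\<in>C. f x y z w)" by (rule sum.swap)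
  finally show ?thesis .
qed

lemma final_alg:
  fixes T :: "'n::finite \<Rightarrow> 'm::finite \<Rightarrow> real" and G :: "'m \<Rightarrow> 'm \<Rightarrow> real"
    and dG :: "'m \<Rightarrow> 'm \<Rightarrow> 'm \<Rightarrow> real" and DE :: "'m \<Rightarrow> 'm \<Rightarrow> real" and E Xi :: "'m \<Rightarrow> real"
    and TT :: "'n \<Rightarrow> 'n \<Rightarrow> 'm \<Rightarrow> real" and DXi :: "'n \<Rightarrow> 'm \<Rightarrow> real" and DC B :: "'n \<Rightarrow> real"
    and DB :: "'n \<Rightarrow> 'n \<Rightarrow> real" and C :: real
  assumes K1: "\<And>a \<rho>. (\<Sum>\<mu>\<in>UNIV. T a \<mu> * DE \<mu> \<rho>) = DC a * Xi \<rho> + C * DXi a \<rho> + (\<Sum>c\<in>UNIV. DB a c * T c \<rho> + B c * TT a c \<rho>)"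
    and K2: "\<And>\<rho>. E \<rho> = C * Xi \<rho> + (\<Sum>c\<in>UNIV. B c * T c \<rho>)"
    and Gs: "\<And>\<mu> \<nu>. G \<mu> \<nu> = G \<nu> \<mu>"
    and TTs: "\<And>a c \<mu>. TT a c \<mu> = TT c a \<mu>"
  shows "(\<Sum>\<mu>\<in>UNIV. \<Sum>\<nu>\<in>UNIV. T a \<mu> * (\<Sum>\<rho>\<in>UNIV. E \<rho> * dG \<rho> \<mu> \<nu> + G \<rho> \<nu> * DE \<mu> \<rho> + G \<mu> \<rho> * DE \<nu> \<rho>) * T b \<nu>)
   = 2 * C * ((1/2) * ((\<Sum>\<rho>\<in>UNIV. \<Sum>\<mu>\<in>UNIV. \<Sum>\<nu>\<in>UNIV. Xi \<rho> * dG \<rho> \<mu> \<nu> * T a \<mu> * T b \<nu>)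
        + (\<Sum>\<rho>\<in>UNIV. \<Sum>\<nu>\<in>UNIV. G \<rho> \<nu> * DXi a \<rho> * T b \<nu>) + (\<Sum>\<mu>\<in>UNIV. \<Sum>\<rho>\<in>UNIV. G \<mu> \<rho> * T a \<mu> * DXi b \<rho>)))
     + (\<Sum>\<mu>\<in>UNIV. \<Sum>\<nu>\<in>UNIV. Xi \<mu> * G \<mu> \<nu> * T a \<nu>) * DC b + (\<Sum>\<mu>\<in>UNIV. \<Sum>\<nu>\<in>UNIV. Xi \<mu> * G \<mu> \<nu> * T b \<nu>) * DC a
     + (\<Sum>c\<in>UNIV. B c * (\<Sum>\<mu>\<in>UNIV. \<Sum>\<nu>\<in>UNIV. TT c a \<mu> * G \<mu> \<nu> * T b \<nu> + T a \<mu> * (\<Sum>\<rho>\<in>UNIV. T c \<rho> * dG \<rho> \<mu> \<nu>) * T b \<nu> + T a \<mu> * G \<mu> \<nu> * TT c b \<nu>)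
          + (\<Sum>\<mu>\<in>UNIV. \<Sum>\<nu>\<in>UNIV. T c \<mu> * G \<mu> \<nu> * T b \<nu>) * DB a c + (\<Sum>\<mu>\<in>UNIV. \<Sum>\<nu>\<in>UNIV. T a \<mu> * G \<mu> \<nu> * T c \<nu>) * DB b c)"
proof -
  define P where "P a \<rho> = (\<Sum>\<mu>\<in>UNIV. T a \<mu> * DE \<mu> \<rho>)" for a \<rho>
  define S1 where "S1 = (\<Sum>\<mu>\<in>UNIV. \<Sum>\<nu>\<in>UNIV. \<Sum>\<rho>\<in>UNIV. T a \<mu> * E \<rho> * dG \<rho> \<mu> \<nu> * T b \<nu>)"
  define S2 where "S2 = (\<Sum>\<rho>\<in>UNIV. \<Sum>\<nu>\<in>UNIV. G \<rho> \<nu> * T b \<nu> * P a \<rho>)"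
  define S3 where "S3 = (\<Sum>\<rho>\<in>UNIV. \<Sum>\<mu>\<in>UNIV. G \<mu> \<rho> * T a \<mu> * P b \<rho>)"
  have split: "(\<Sum>\<mu>\<in>UNIV. \<Sum>\<nu>\<in>UNIV. T a \<mu> * (\<Sum>\<rho>\<in>UNIV. E \<rho> * dG \<rho> \<mu> \<nu> + G \<rho> \<nu> * DE \<mu> \<rho> + G \<mu> \<rho> * DE \<nu> \<rho>) * T b \<nu>)
     = S1 + S2 + S3"
  proof -
    have "(\<Sum>\<mu>\<in>UNIV. \<Sum>\<nu>\<in>UNIV. T a \<mu> * (\<Sum>\<rho>\<in>UNIV. E \<rho> * dG \<rho> \<mu> \<nu> + G \<rho> \<nu> * DE \<mu> \<rho> + G \<mu> \<rho> * DE \<nu> \<rho>) * T b \<nu>)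
      = S1 + (\<Sum>\<mu>\<in>UNIV. \<Sum>\<nu>\<in>UNIV. \<Sum>\<rho>\<in>UNIV. T a \<mu> * G \<rho> \<nu> * DE \<mu> \<rho> * T b \<nu>)
           + (\<Sum>\<mu>\<in>UNIV. \<Sum>\<nu>\<in>UNIV. \<Sum>\<rho>\<in>UNIV. T a \<mu> * G \<mu> \<rho> * DE \<nu> \<rho> * T b \<nu>)"
      unfolding S1_def by (simp add: sum.distrib sum_distrib_left sum_distrib_right algebra_simps)
    moreover have "(\<Sum>\<mu>\<in>UNIV. \<Sum>\<nu>\<in>UNIV. \<Sum>\<rho>\<in>UNIV. T a \<mu> * G \<rho> \<nu> * DE \<mu> \<rho> * T b \<nu>) = S2"
    proof -
      have "(\<Sum>\<mu>\<in>UNIV. \<Sum>\<nu>\<in>UNIV. \<Sum>\<rho>\<in>UNIV. T a \<mu> * G \<rho> \<nu> * DE \<mu> \<rho> * T b \<nu>)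
          = (\<Sum>\<mu>\<in>UNIV. \<Sum>\<rho>\<in>UNIV. \<Sum>\<nu>\<in>UNIV. T a \<mu> * G \<rho> \<nu> * DE \<mu> \<rho> * T b \<nu>)"
        by (rule sum.cong[OF refl], rule sum.swap)
      also have "\<dots> = (\<Sum>\<rho>\<in>UNIV. \<Sum>\<mu>\<in>UNIV. \<Sum>\<nu>\<in>UNIV. T a \<mu> * G \<rho> \<nu> * DE \<mu> \<rho> * T b \<nu>)"
        by (rule sum.swap)
      also have "\<dots> = (\<Sum>\<rho>\<in>UNIV. \<Sum>\<nu>\<in>UNIV. \<Sum>\<mu>\<in>UNIV. T a \<mu> * G \<rho> \<nu> * DE \<mu> \<rho> * T b \<nu>)"
        by (rule sum.cong[OF refl], rule sum.swap)
      also have "\<dots> = S2"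
        unfolding S2_def P_def by (simp add: sum_distrib_left sum_distrib_right algebra_simps)
      finally show ?thesis .
    qed
    moreover have "(\<Sum>\<mu>\<in>UNIV. \<Sum>\<nu>\<in>UNIV. \<Sum>\<rho>\<in>UNIV. T a \<mu> * G \<mu> \<rho> * DE \<nu> \<rho> * T b \<nu>) = S3"
    proof -
      have "(\<Sum>\<mu>\<in>UNIV. \<Sum>\<nu>\<in>UNIV. \<Sum>\<rho>\<in>UNIV. T a \<mu> * G \<mu> \<rho> * DE \<nu> \<rho> * T b \<nu>)
          = (\<Sum>\<mu>\<in>UNIV. \<Sum>\<rho>\<in>UNIV. \<Sum>\<nu>\<in>UNIV. T a \<mu> * G \<mu> \<rho> * DE \<nu> \<rho> * T b \<nu>)"
        by (rule sum.cong[OF refl], rule sum.swap)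
      also have "\<dots> = (\<Sum>\<rho>\<in>UNIV. \<Sum>\<mu>\<in>UNIV. \<Sum>\<nu>\<in>UNIV. T a \<mu> * G \<mu> \<rho> * DE \<nu> \<rho> * T b \<nu>)"
        by (rule sum.swap)
      also have "\<dots> = S3"
        unfolding S3_def P_def by (simp add: sum_distrib_left sum_distrib_right algebra_simps)
      finally show ?thesis .
    qed
    ultimately show ?thesis by simp
  qed
  define Y1 where "Y1 = (\<Sum>\<rho>\<in>UNIV. \<Sum>\<mu>\<in>UNIV. \<Sum>\<nu>\<in>UNIV. Xi \<rho> * dG \<rho> \<mu> \<nu> * T a \<mu> * T b \<nu>)"
  define Y2 where "Y2 = (\<Sum>\<rho>\<in>UNIV. \<Sum>\<nu>\<in>UNIV. G \<rho> \<nu> * DXi a \<rho> * T b \<nu>)"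
  define Y3 where "Y3 = (\<Sum>\<mu>\<in>UNIV. \<Sum>\<rho>\<in>UNIV. G \<mu> \<rho> * T a \<mu> * DXi b \<rho>)"
  define la where "la = (\<Sum>\<mu>\<in>UNIV. \<Sum>\<nu>\<in>UNIV. Xi \<mu> * G \<mu> \<nu> * T a \<nu>)"
  define lb where "lb = (\<Sum>\<mu>\<in>UNIV. \<Sum>\<nu>\<in>UNIV. Xi \<mu> * G \<mu> \<nu> * T b \<nu>)"
  define A1 where "A1 c = (\<Sum>\<mu>\<in>UNIV. \<Sum>\<nu>\<in>UNIV. TT c a \<mu> * G \<mu> \<nu> * T b \<nu>)" for c
  define A2 where "A2 c = (\<Sum>\<mu>\<in>UNIV. \<Sum>\<nu>\<in>UNIV. T a \<mu> * (\<Sum>\<rho>\<in>UNIV. T c \<rho> * dG \<rho> \<mu> \<nu>) * T b \<nu>)" for c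
  define A3 where "A3 c = (\<Sum>\<mu>\<in>UNIV. \<Sum>\<nu>\<in>UNIV. T a \<mu> * G \<mu> \<nu> * TT c b \<nu>)" for c
  define gcb where "gcb c = (\<Sum>\<mu>\<in>UNIV. \<Sum>\<nu>\<in>UNIV. T c \<mu> * G \<mu> \<nu> * T b \<nu>)" for c
  define gac where "gac c = (\<Sum>\<mu>\<in>UNIV. \<Sum>\<nu>\<in>UNIV. T a \<mu> * G \<mu> \<nu> * T c \<nu>)" for c
  have S1: "S1 = C * Y1 + (\<Sum>c\<in>UNIV. B c * A2 c)"
  proof -
    have "S1 = (\<Sum>\<mu>\<in>UNIV. \<Sum>\<nu>\<in>UNIV. \<Sum>\<rho>\<in>UNIV. C * (T a \<mu> * Xi \<rho> * dG \<rho> \<mu> \<nu> * T b \<nu>))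
             + (\<Sum>\<mu>\<in>UNIV. \<Sum>\<nu>\<in>UNIV. \<Sum>\<rho>\<in>UNIV. \<Sum>c\<in>UNIV. B c * (T a \<mu> * T c \<rho> * dG \<rho> \<mu> \<nu> * T b \<nu>))"
      unfolding S1_def K2 by (simp add: sum.distrib sum_distrib_left sum_distrib_right algebra_simps)
    also have "(\<Sum>\<mu>\<in>UNIV. \<Sum>\<nu>\<in>UNIV. \<Sum>\<rho>\<in>UNIV. C * (T a \<mu> * Xi \<rho> * dG \<rho> \<mu> \<nu> * T b \<nu>))
         = (\<Sum>\<rho>\<in>UNIV. \<Sum>\<mu>\<in>UNIV. \<Sum>\<nu>\<in>UNIV. C * (T a \<mu> * Xi \<rho> * dG \<rho> \<mu> \<nu> * T b \<nu>))"
      by (rule rot3)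
    also have "(\<Sum>\<mu>\<in>UNIV. \<Sum>\<nu>\<in>UNIV. \<Sum>\<rho>\<in>UNIV. \<Sum>c\<in>UNIV. B c * (T a \<mu> * T c \<rho> * dG \<rho> \<mu> \<nu> * T b \<nu>))
         = (\<Sum>c\<in>UNIV. \<Sum>\<mu>\<in>UNIV. \<Sum>\<nu>\<in>UNIV. \<Sum>\<rho>\<in>UNIV. B c * (T a \<mu> * T c \<rho> * dG \<rho> \<mu> \<nu> * T b \<nu>))"
      by (rule rot4)
    finally show ?thesis unfolding Y1_def A2_def
      by (simp add: sum_distrib_left sum_distrib_right algebra_simps)
  qed
  have S2: "S2 = DC a * lb + C * Y2 + (\<Sum>c\<in>UNIV. DB a c * gcb c) + (\<Sum>c\<in>UNIV. B c * A1 c)"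
  proof -
    have "S2 = (\<Sum>\<rho>\<in>UNIV. \<Sum>\<nu>\<in>UNIV. DC a * (Xi \<rho> * G \<rho> \<nu> * T b \<nu>)) + (\<Sum>\<rho>\<in>UNIV. \<Sum>\<nu>\<in>UNIV. C * (G \<rho> \<nu> * DXi a \<rho> * T b \<nu>))
         + (\<Sum>\<rho>\<in>UNIV. \<Sum>\<nu>\<in>UNIV. \<Sum>c\<in>UNIV. DB a c * (T c \<rho> * G \<rho> \<nu> * T b \<nu>))
         + (\<Sum>\<rho>\<in>UNIV. \<Sum>\<nu>\<in>UNIV. \<Sum>c\<in>UNIV. B c * (TT a c \<rho> * G \<rho> \<nu> * T b \<nu>))"
      unfolding S2_def P_def K1 by (simp add: sum.distrib sum_distrib_left sum_distrib_right algebra_simps)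
    also have "(\<Sum>\<rho>\<in>UNIV. \<Sum>\<nu>\<in>UNIV. \<Sum>c\<in>UNIV. DB a c * (T c \<rho> * G \<rho> \<nu> * T b \<nu>))
       = (\<Sum>c\<in>UNIV. \<Sum>\<rho>\<in>UNIV. \<Sum>\<nu>\<in>UNIV. DB a c * (T c \<rho> * G \<rho> \<nu> * T b \<nu>))" by (rule rot3)
    also have "(\<Sum>\<rho>\<in>UNIV. \<Sum>\<nu>\<in>UNIV. \<Sum>c\<in>UNIV. B c * (TT a c \<rho> * G \<rho> \<nu> * T b \<nu>))
       = (\<Sum>c\<in>UNIV. \<Sum>\<rho>\<in>UNIV. \<Sum>\<nu>\<in>UNIV. B c * (TT c a \<rho> * G \<rho> \<nu> * T b \<nu>))" by (subst rot3) (simp add: TTs[of a])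
    finally show ?thesis unfolding lb_def Y2_def gcb_def A1_def
      by (simp add: sum_distrib_left sum_distrib_right algebra_simps)
  qed
  have S3: "S3 = DC b * la + C * Y3 + (\<Sum>c\<in>UNIV. DB b c * gac c) + (\<Sum>c\<in>UNIV. B c * A3 c)"
  proof -
    have "S3 = (\<Sum>\<rho>\<in>UNIV. \<Sum>\<mu>\<in>UNIV. DC b * (Xi \<rho> * G \<rho> \<mu> * T a \<mu>)) + (\<Sum>\<rho>\<in>UNIV. \<Sum>\<mu>\<in>UNIV. C * (G \<mu> \<rho> * T a \<mu> * DXi b \<rho>))
         + (\<Sum>\<rho>\<in>UNIV. \<Sum>\<mu>\<in>UNIV. \<Sum>c\<in>UNIV. DB b c * (T a \<mu> * G \<mu> \<rho> * T c \<rho>))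
         + (\<Sum>\<rho>\<in>UNIV. \<Sum>\<mu>\<in>UNIV. \<Sum>c\<in>UNIV. B c * (T a \<mu> * G \<mu> \<rho> * TT c b \<rho>))"
      unfolding S3_def P_def K1 by (simp add: sum.distrib sum_distrib_left sum_distrib_right algebra_simps Gs[of _ \<rho> for \<rho>] TTs[of b])
    also have "(\<Sum>\<rho>\<in>UNIV. \<Sum>\<mu>\<in>UNIV. C * (G \<mu> \<rho> * T a \<mu> * DXi b \<rho>)) = (\<Sum>\<mu>\<in>UNIV. \<Sum>\<rho>\<in>UNIV. C * (G \<mu> \<rho> * T a \<mu> * DXi b \<rho>))"
      by (rule sum.swap)
    also have "(\<Sum>\<rho>\<in>UNIV. \<Sum>\<mu>\<in>UNIV. \<Sum>c\<in>UNIV. DB b c * (T a \<mu> * G \<mu> \<rho> * T c \<rho>))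
       = (\<Sum>c\<in>UNIV. \<Sum>\<rho>\<in>UNIV. \<Sum>\<mu>\<in>UNIV. DB b c * (T a \<mu> * G \<mu> \<rho> * T c \<rho>))" by (rule rot3)
    also have "\<dots> = (\<Sum>c\<in>UNIV. \<Sum>\<mu>\<in>UNIV. \<Sum>\<rho>\<in>UNIV. DB b c * (T a \<mu> * G \<mu> \<rho> * T c \<rho>))"
      by (rule sum.cong[OF refl], rule sum.swap)
    also have "(\<Sum>\<rho>\<in>UNIV. \<Sum>\<mu>\<in>UNIV. \<Sum>c\<in>UNIV. B c * (T a \<mu> * G \<mu> \<rho> * TT c b \<rho>))
       = (\<Sum>c\<in>UNIV. \<Sum>\<rho>\<in>UNIV. \<Sum>\<mu>\<in>UNIV. B c * (T a \<mu> * G \<mu> \<rho> * TT c b \<rho>))" by (rule rot3)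
    also have "\<dots> = (\<Sum>c\<in>UNIV. \<Sum>\<mu>\<in>UNIV. \<Sum>\<rho>\<in>UNIV. B c * (T a \<mu> * G \<mu> \<rho> * TT c b \<rho>))"
      by (rule sum.cong[OF refl], rule sum.swap)
    finally show ?thesis unfolding la_def Y3_def gac_def A3_def
      by (simp add: sum_distrib_left sum_distrib_right algebra_simps)
  qed
  have R: "2 * C * ((1/2) * (Y1 + Y2 + Y3)) + la * DC b + lb * DC a
     + (\<Sum>c\<in>UNIV. B c * (A1 c + A2 c + A3 c) + gcb c * DB a c + gac c * DB b c)
     = S1 + S2 + S3"
    unfolding S1 S2 S3 by (simp add: sum.distrib algebra_simps)
  have E: "(\<Sum>c\<in>UNIV. B c * (\<Sum>\<mu>\<in>UNIV. \<Sum>\<nu>\<in>UNIV. TT c a \<mu> * G \<mu> \<nu> * T b \<nu> + T a \<mu> * (\<Sum>\<rho>\<in>UNIV. T c \<rho> * dG \<rho> \<mu> \<nu>) * T b \<nu> + T a \<mu> * G \<mu> \<nu> * TT c b \<nu>)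
          + (\<Sum>\<mu>\<in>UNIV. \<Sum>\<nu>\<in>UNIV. T c \<mu> * G \<mu> \<nu> * T b \<nu>) * DB a c + (\<Sum>\<mu>\<in>UNIV. \<Sum>\<nu>\<in>UNIV. T a \<mu> * G \<mu> \<nu> * T c \<nu>) * DB b c)
      = (\<Sum>c\<in>UNIV. B c * (A1 c + A2 c + A3 c) + gcb c * DB a c + gac c * DB b c)"
    unfolding A1_def A2_def A3_def gcb_def gac_def by (simp only: sum.distrib)
  show ?thesis unfolding split E R[symmetric] Y1_def Y2_def Y3_def la_def lb_def by simp
qed



lemma smooth_diff: "smooth_fun_on U f \<Longrightarrow> x \<in> U \<Longrightarrow> f differentiable (at x)"
  unfolding smooth_fun_on_def by (metis Ck_on.simps(2))

lemma smooth_partial: "smooth_fun_on U f \<Longrightarrow> smooth_fun_on U (partial i f)"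
  unfolding smooth_fun_on_def by (metis Ck_on.simps(2))

lemma smooth_cont: "smooth_fun_on U f \<Longrightarrow> open U \<Longrightarrow> x \<in> U \<Longrightarrow> continuous (at x) f"
  unfolding smooth_fun_on_def by (metis Ck_on.simps(1) continuous_on_eq_continuous_at)

lemma smooth_clairaut:
  assumes "open U" "x \<in> U" "smooth_fun_on U f"
  shows "partial j (partial i f) x = partial i (partial j f) x"
  by (rule clairaut[OF assms(1,2)])
     (use assms smooth_diff smooth_partial smooth_cont in blast)+

theorem proposition4p1:
  fixes U :: "(real^'n::finite) set" and V :: "(real^'m::finite) set"
    and \<gamma> Y :: "real^'n \<Rightarrow> 'n \<Rightarrow> 'n \<Rightarrow> real" and l :: "real^'n \<Rightarrow> 'n \<Rightarrow> real"
    and l2 :: "real^'n \<Rightarrow> real"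
    and g :: "real^'m \<Rightarrow> real^'m^'m" and \<Phi> \<xi> :: "real^'n \<Rightarrow> real^'m"
    and \<eta> :: "real^'m \<Rightarrow> real^'m" and C :: "real^'n \<Rightarrow> real" and \<eta>bar :: "real^'n \<Rightarrow> real^'n"
  assumes dim: "CARD('m) = CARD('n) + 1"
    and M: "semi_riemannian_on V g"
    and data: "hypersurface_data_on U \<gamma> l l2 Y"
    and emb: "embedded_data_on U \<gamma> l l2 Y V g \<Phi> \<xi>"
    and eta: "smooth_vec_on V \<eta>"
    and C: "smooth_fun_on U C" and etabar: "smooth_vec_on U \<eta>bar"
    and decomp: "\<forall>x\<in>U. \<eta> (\<Phi> x) = C x *\<^sub>R \<xi> x + (\<Sum>a\<in>UNIV. \<eta>bar x $ a *\<^sub>R tang \<Phi> a x)"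
  shows "\<forall>x\<in>U. \<forall>a b. pullback2 \<Phi> (lie_metric \<eta> g) x a b
           = 2 * C x * Y x a b + l x a * partial b C x + l x b * partial a C x
             + lie2 \<eta>bar \<gamma> x a b"
proof (intro ballI allI)
  fix x a b assume x: "x \<in> U"
  have U: "open U" using data by (simp add: hypersurface_data_on_def)
  have V: "open V" and gsm: "smooth_mat_on V g" and gsym: "\<And>p. p \<in> V \<Longrightarrow> transpose (g p) = g p"
    using M by (auto simp: semi_riemannian_on_def)
  have Psm: "smooth_vec_on U \<Phi>" and PV: "\<Phi> ` U \<subseteq> V" and xism: "smooth_vec_on U \<xi>"
    using emb by (auto simp: embedded_data_on_def embedding_on_def)
  have eqs: "\<And>y. y \<in> U \<Longrightarrow> (\<forall>a b. \<gamma> y a b = gmet (g (\<Phi> y)) (tang \<Phi> a y) (tang \<Phi> b y)) \<and>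
        (\<forall>a. l y a = gmet (g (\<Phi> y)) (\<xi> y) (tang \<Phi> a y)) \<and>
        (\<forall>a b. Y y a b = transverse_Y g \<Phi> \<xi> y a b)"
    using emb by (auto simp: embedded_data_on_def)
  have Px: "\<Phi> x \<in> V" using PV x by auto
  have sP: "\<And>\<rho>. smooth_fun_on U (\<lambda>y. \<Phi> y $ \<rho>)" using Psm by (simp add: smooth_vec_on_def)
  have dP: "\<And>\<rho> y. y \<in> U \<Longrightarrow> (\<lambda>y. \<Phi> y $ \<rho>) differentiable (at y)" using sP smooth_diff by blast
  have dP2: "\<And>c \<rho>. partial c (\<lambda>z. \<Phi> z $ \<rho>) differentiable (at x)"
    using sP smooth_partial smooth_diff x by blast
  have dxi: "\<And>\<rho>. (\<lambda>y. \<xi> y $ \<rho>) differentiable (at x)"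
    using xism x smooth_diff unfolding smooth_vec_on_def by blast
  have dC: "C differentiable (at x)" using C x smooth_diff by blast
  have deb: "\<And>c. (\<lambda>y. \<eta>bar y $ c) differentiable (at x)"
    using etabar x smooth_diff unfolding smooth_vec_on_def by blast
  have dg: "\<And>\<mu> \<nu>. (\<lambda>q. g q $ \<mu> $ \<nu>) differentiable (at (\<Phi> x))"
    using gsm Px smooth_diff unfolding smooth_mat_on_def by blast
  have deta: "\<And>\<rho>. (\<lambda>q. \<eta> q $ \<rho>) differentiable (at (\<Phi> x))"
    using eta Px smooth_diff unfolding smooth_vec_on_def by blast
  have dPhi: "\<Phi> differentiable (at x)" using differentiable_cart dP x by blast
  have dgP: "\<And>\<mu> \<nu>. (\<lambda>y. g (\<Phi> y) $ \<mu> $ \<nu>) differentiable (at x)"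
  proof -
    fix \<mu> \<nu>
    have "((\<lambda>q. g q $ \<mu> $ \<nu>) \<circ> \<Phi>) differentiable (at x)"
      by (rule differentiable_chain_at[OF dPhi dg])
    thus "(\<lambda>y. g (\<Phi> y) $ \<mu> $ \<nu>) differentiable (at x)" by (simp add: o_def)
  qed
  have tg: "\<And>c y. tang \<Phi> c y = (\<chi> \<mu>. partial c (\<lambda>z. \<Phi> z $ \<mu>) y)" by (simp add: tang_def)
  have K1: "(\<Sum>\<mu>\<in>UNIV. partial a (\<lambda>y. \<Phi> y $ \<mu>) x * partial \<mu> (\<lambda>q. \<eta> q $ \<rho>) (\<Phi> x))
     = partial a C x * \<xi> x $ \<rho> + C x * partial a (\<lambda>y. \<xi> y $ \<rho>) x
       + (\<Sum>c\<in>UNIV. partial a (\<lambda>y. \<eta>bar y $ c) x * partial c (\<lambda>z. \<Phi> z $ \<rho>) x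
            + \<eta>bar x $ c * partial a (partial c (\<lambda>z. \<Phi> z $ \<rho>)) x)" for a \<rho>
  proof -
    have "(\<Sum>\<mu>\<in>UNIV. partial a (\<lambda>y. \<Phi> y $ \<mu>) x * partial \<mu> (\<lambda>q. \<eta> q $ \<rho>) (\<Phi> x))
        = partial a (\<lambda>y. \<eta> (\<Phi> y) $ \<rho>) x"
      using partial_chain[of \<Phi> x "\<lambda>q. \<eta> q $ \<rho>" a] dP[OF x] deta by simp
    also have "\<dots> = partial a (\<lambda>y. C y * \<xi> y $ \<rho> + (\<Sum>c\<in>UNIV. \<eta>bar y $ c * partial c (\<lambda>z. \<Phi> z $ \<rho>) y)) x"
      by (rule partial_local[OF U x]) (simp add: decomp tg)
    also have "\<dots> = partial a (\<lambda>y. C y * \<xi> y $ \<rho>) x + partial a (\<lambda>y. \<Sum>c\<in>UNIV. \<eta>bar y $ c * partial c (\<lambda>z. \<Phi> z $ \<rho>) y) x"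
      by (rule partial_add) (use dC dxi deb dP2 in \<open>auto intro!: differentiable_mult differentiable_sum\<close>)
    also have "partial a (\<lambda>y. C y * \<xi> y $ \<rho>) x = partial a C x * \<xi> x $ \<rho> + C x * partial a (\<lambda>y. \<xi> y $ \<rho>) x"
      by (rule partial_mult[OF dC dxi])
    also have "partial a (\<lambda>y. \<Sum>c\<in>UNIV. \<eta>bar y $ c * partial c (\<lambda>z. \<Phi> z $ \<rho>) y) x
        = (\<Sum>c\<in>UNIV. partial a (\<lambda>y. \<eta>bar y $ c * partial c (\<lambda>z. \<Phi> z $ \<rho>) y) x)"
      by (rule partial_sum) (use deb dP2 in \<open>auto intro!: differentiable_mult\<close>)
    also have "\<dots> = (\<Sum>c\<in>UNIV. partial a (\<lambda>y. \<eta>bar y $ c) x * partial c (\<lambda>z. \<Phi> z $ \<rho>) x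
            + \<eta>bar x $ c * partial a (partial c (\<lambda>z. \<Phi> z $ \<rho>)) x)"
      by (rule sum.cong[OF refl], rule partial_mult[OF deb dP2])
    finally show ?thesis .
  qed
  have K2: "\<eta> (\<Phi> x) $ \<rho> = C x * \<xi> x $ \<rho> + (\<Sum>c\<in>UNIV. \<eta>bar x $ c * partial c (\<lambda>z. \<Phi> z $ \<rho>) x)" for \<rho>
    using decomp x by (simp add: tg)
  have Gs: "g (\<Phi> x) $ \<mu> $ \<nu> = g (\<Phi> x) $ \<nu> $ \<mu>" for \<mu> \<nu>
  proof -
    have "g (\<Phi> x) $ \<mu> $ \<nu> = transpose (g (\<Phi> x)) $ \<mu> $ \<nu>" using gsym[OF Px] by simp
    thus ?thesis by (simp add: transpose_def)
  qed
  have TTs: "partial a (partial c (\<lambda>z. \<Phi> z $ \<mu>)) x = partial c (partial a (\<lambda>z. \<Phi> z $ \<mu>)) x" for a c \<mu>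
    by (rule smooth_clairaut[OF U x sP])
  have K3: "partial c (\<lambda>y. \<gamma> y a b) x = (\<Sum>\<mu>\<in>UNIV. \<Sum>\<nu>\<in>UNIV.
        partial c (partial a (\<lambda>z. \<Phi> z $ \<mu>)) x * g (\<Phi> x) $ \<mu> $ \<nu> * partial b (\<lambda>z. \<Phi> z $ \<nu>) x
      + partial a (\<lambda>z. \<Phi> z $ \<mu>) x * (\<Sum>\<rho>\<in>UNIV. partial c (\<lambda>z. \<Phi> z $ \<rho>) x * partial \<rho> (\<lambda>q. g q $ \<mu> $ \<nu>) (\<Phi> x)) * partial b (\<lambda>z. \<Phi> z $ \<nu>) x
      + partial a (\<lambda>z. \<Phi> z $ \<mu>) x * g (\<Phi> x) $ \<mu> $ \<nu> * partial c (partial b (\<lambda>z. \<Phi> z $ \<nu>)) x)" for c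
  proof -
    have "partial c (\<lambda>y. \<gamma> y a b) x = partial c (\<lambda>y. \<Sum>\<mu>\<in>UNIV. \<Sum>\<nu>\<in>UNIV.
        partial a (\<lambda>z. \<Phi> z $ \<mu>) y * g (\<Phi> y) $ \<mu> $ \<nu> * partial b (\<lambda>z. \<Phi> z $ \<nu>) y) x"
      by (rule partial_local[OF U x]) (simp add: eqs gmet_def tg)
    also have "\<dots> = (\<Sum>\<mu>\<in>UNIV. partial c (\<lambda>y. \<Sum>\<nu>\<in>UNIV.
        partial a (\<lambda>z. \<Phi> z $ \<mu>) y * g (\<Phi> y) $ \<mu> $ \<nu> * partial b (\<lambda>z. \<Phi> z $ \<nu>) y) x)"
      by (rule partial_sum) (use dP2 dgP in \<open>auto intro!: differentiable_mult differentiable_sum\<close>)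
    also have "\<dots> = (\<Sum>\<mu>\<in>UNIV. \<Sum>\<nu>\<in>UNIV. partial c (\<lambda>y.
        partial a (\<lambda>z. \<Phi> z $ \<mu>) y * g (\<Phi> y) $ \<mu> $ \<nu> * partial b (\<lambda>z. \<Phi> z $ \<nu>) y) x)"
      by (intro sum.cong refl partial_sum) (use dP2 dgP in \<open>auto intro!: differentiable_mult\<close>)
    also have "\<dots> = (\<Sum>\<mu>\<in>UNIV. \<Sum>\<nu>\<in>UNIV.
        partial c (partial a (\<lambda>z. \<Phi> z $ \<mu>)) x * g (\<Phi> x) $ \<mu> $ \<nu> * partial b (\<lambda>z. \<Phi> z $ \<nu>) x
      + partial a (\<lambda>z. \<Phi> z $ \<mu>) x * (\<Sum>\<rho>\<in>UNIV. partial c (\<lambda>z. \<Phi> z $ \<rho>) x * partial \<rho> (\<lambda>q. g q $ \<mu> $ \<nu>) (\<Phi> x)) * partial b (\<lambda>z. \<Phi> z $ \<nu>) x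
      + partial a (\<lambda>z. \<Phi> z $ \<mu>) x * g (\<Phi> x) $ \<mu> $ \<nu> * partial c (partial b (\<lambda>z. \<Phi> z $ \<nu>)) x)"
    proof (intro sum.cong refl)
      fix \<mu> \<nu>
      have m1: "(\<lambda>y. partial a (\<lambda>z. \<Phi> z $ \<mu>) y * g (\<Phi> y) $ \<mu> $ \<nu>) differentiable (at x)"
        using dP2 dgP by (auto intro!: differentiable_mult)
      have ch: "partial c (\<lambda>y. g (\<Phi> y) $ \<mu> $ \<nu>) x = (\<Sum>\<rho>\<in>UNIV. partial c (\<lambda>z. \<Phi> z $ \<rho>) x * partial \<rho> (\<lambda>q. g q $ \<mu> $ \<nu>) (\<Phi> x))"
        using partial_chain[of \<Phi> x "\<lambda>q. g q $ \<mu> $ \<nu>" c] dP[OF x] dg by simp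
      show "partial c (\<lambda>y. partial a (\<lambda>z. \<Phi> z $ \<mu>) y * g (\<Phi> y) $ \<mu> $ \<nu> * partial b (\<lambda>z. \<Phi> z $ \<nu>) y) x =
        partial c (partial a (\<lambda>z. \<Phi> z $ \<mu>)) x * g (\<Phi> x) $ \<mu> $ \<nu> * partial b (\<lambda>z. \<Phi> z $ \<nu>) x
      + partial a (\<lambda>z. \<Phi> z $ \<mu>) x * (\<Sum>\<rho>\<in>UNIV. partial c (\<lambda>z. \<Phi> z $ \<rho>) x * partial \<rho> (\<lambda>q. g q $ \<mu> $ \<nu>) (\<Phi> x)) * partial b (\<lambda>z. \<Phi> z $ \<nu>) x
      + partial a (\<lambda>z. \<Phi> z $ \<mu>) x * g (\<Phi> x) $ \<mu> $ \<nu> * partial c (partial b (\<lambda>z. \<Phi> z $ \<nu>)) x"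
        using partial_mult[OF m1 dP2[of b \<nu>], of c] partial_mult[OF dP2[of a \<mu>] dgP[of \<mu> \<nu>], of c] ch
        by (simp add: algebra_simps)
    qed
    finally show ?thesis .
  qed
  note main = final_alg[of "\<lambda>c \<mu>. partial c (\<lambda>z. \<Phi> z $ \<mu>) x"
      "\<lambda>\<mu> \<rho>. partial \<mu> (\<lambda>q. \<eta> q $ \<rho>) (\<Phi> x)" "\<lambda>a. partial a C x" "\<lambda>\<rho>. \<xi> x $ \<rho>" "C x"
      "\<lambda>a \<rho>. partial a (\<lambda>y. \<xi> y $ \<rho>) x" "\<lambda>a c. partial a (\<lambda>y. \<eta>bar y $ c) x" "\<lambda>c. \<eta>bar x $ c"
      "\<lambda>a c \<mu>. partial a (partial c (\<lambda>z. \<Phi> z $ \<mu>)) x" "\<lambda>\<rho>. \<eta> (\<Phi> x) $ \<rho>" "\<lambda>\<mu> \<nu>. g (\<Phi> x) $ \<mu> $ \<nu>"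
      a "\<lambda>\<rho> \<mu> \<nu>. partial \<rho> (\<lambda>q. g q $ \<mu> $ \<nu>) (\<Phi> x)" b, OF K1 K2 Gs TTs]
  show "pullback2 \<Phi> (lie_metric \<eta> g) x a b
           = 2 * C x * Y x a b + l x a * partial b C x + l x b * partial a C x
             + lie2 \<eta>bar \<gamma> x a b"
  proof -
    have Yx: "Y x a b = transverse_Y g \<Phi> \<xi> x a b" using eqs[OF x] by blast
    have lx: "\<And>c. l x c = gmet (g (\<Phi> x)) (\<xi> x) (tang \<Phi> c x)" using eqs[OF x] by blast
    have gx: "\<And>c d. \<gamma> x c d = gmet (g (\<Phi> x)) (tang \<Phi> c x) (tang \<Phi> d x)" using eqs[OF x] by blast
    show ?thesis
      unfolding pullback2_def lie_metric_def lie2_def K3 Yx lx gx transverse_Y_def gmet_def tg vec_lambda_beta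
      by (rule main)
  qed
qed

end
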